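(* Let $w$ be a perfectly clustering Lyndon word over a totally ordered alphabet, with a palindromic special factorization $w=a_1\pi_1a_2\pi_2\cdots\pi_{k-1}a_k$. Let $s\in\{1,\dots,k-1\}$. If $\pi_s$ is the empty word, then $c_1+\cdots+c_s=c_{s+1}+\cdots+c_k$, where $c_h=|w|_{a_h}$.
   Context: $|w|_a$ denotes the number of occurrences of the letter $a$ in $w$. A special factorization of $w$ is a factorization $w=a_1\pi_1a_2\cdots\pi_{k-1}a_k$ where the set of letters occurring in $w$ is $\{a_1<\cdots<a_k\}$ and $\pi_1,\dots,\pi_{k-1}$ are words; it is palindromic if every $\pi_i$ is a palindrome. Lexicographic order: a proper prefix is smaller. A Lyndon word is a primitive word strictly smaller than its other conjugates. For a primitive word $v$ of length $n$ with conjugates $v_1<\cdots<v_n$, $\mathrm{bw}(v)$ is the word formed by the last letters of $v_1,\dots,v_n$; $v$ is perfectly clustering if $\mathrm{bw}(v)$ is weakly decreasing. *)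

theory Defs
  imports Main "HOL-Library.List_Lexorder"
begin

(* Words are lists over a linearly ordered alphabet 'a.  The order on words is
   the lexicographic order of HOL-Library.List_Lexorder (a proper prefix is smaller). *)

definition primitive :: "'a list \<Rightarrow> bool" where
  "primitive v \<longleftrightarrow> v \<noteq> [] \<and> (\<forall>u k. v = concat (replicate k u) \<longrightarrow> k = 1)"

definition conjugates :: "'a list \<Rightarrow> 'a list set" where
  "conjugates v = {rotate i v | i. i < length v}"

definition lyndon :: "'a::linorder list \<Rightarrow> bool" where
  "lyndon v \<longleftrightarrow> primitive v \<and> (\<forall>u \<in> conjugates v. u \<noteq> v \<longrightarrow> v < u)"

definition bw :: "'a::linorder list \<Rightarrow> 'a list" where
  "bw v = map last (sorted_list_of_set (conjugates v))"

definition perfectly_clustering :: "'a::linorder list \<Rightarrow> bool" where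
  "perfectly_clustering v \<longleftrightarrow> primitive v \<and> sorted_wrt (\<ge>) (bw v)"

definition palindrome :: "'a list \<Rightarrow> bool" where
  "palindrome p \<longleftrightarrow> rev p = p"

(* The word a_1 pi_1 a_2 ... pi_{k-1} a_k, with as = [a_1,...,a_k], pis = [pi_1,...,pi_{k-1}] *)
definition factor_word :: "'a list \<Rightarrow> 'a list list \<Rightarrow> 'a list" where
  "factor_word as pis = [as ! 0] @ concat (map (\<lambda>i. pis ! i @ [as ! Suc i]) [0..<length pis])"

definition special_factorization :: "'a::linorder list \<Rightarrow> 'a list \<Rightarrow> 'a list list \<Rightarrow> bool" where
  "special_factorization w as pis \<longleftrightarrow>
     as \<noteq> [] \<and> length pis = length as - 1 \<and> sorted_wrt (<) as \<and> set as = set w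
     \<and> w = factor_word as pis"

definition palindromic_special_factorization :: "'a::linorder list \<Rightarrow> 'a list \<Rightarrow> 'a list list \<Rightarrow> bool" where
  "palindromic_special_factorization w as pis \<longleftrightarrow>
     special_factorization w as pis \<and> (\<forall>p \<in> set pis. palindrome p)"

end

theory Submission
  imports Defs
begin

lemma lex_snoc_same:
  fixes u v :: "'a::linorder list"
  shows "length u = length v \<Longrightarrow> (u @ [x] < v @ [x]) = (u < v)"
proof (induction u v rule: list_induct2)
  case Nil
  then show ?case by simp
next
  case (Cons a u b v)
  then show ?case by (simp add: Cons_less_Cons)
qed

lemma lex_prefix_less:
  fixes u v :: "'a::linorder list"
  shows "j < length u \<Longrightarrow> j < length v \<Longrightarrow> take j u = take j v \<Longrightarrow> u!j < v!j \<Longrightarrow> u < v"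
proof (induction j arbitrary: u v)
  case 0
  then show ?case by (cases u; cases v) (auto simp: Cons_less_Cons)
next
  case (Suc j)
  then show ?case by (cases u; cases v) (auto simp: Cons_less_Cons)
qed

lemma concat_replicate_nth:
  "x < q * length u \<Longrightarrow> concat (replicate q u) ! x = u ! (x mod length u)"
proof (induction q arbitrary: x)
  case 0
  then show ?case by simp
next
  case (Suc q)
  show ?case
  proof (cases "x < length u")
    case True
    then show ?thesis by (simp add: nth_append)
  next
    case False
    then have "x - length u < q * length u" using Suc.prems by auto
    then show ?thesis using False Suc.IH by (simp add: nth_append le_mod_geq)
  qed
qed

lemma rotate_fixed_not_primitive:
  assumes prim: "primitive w" and d: "0 < d" "d < length w" and hfix: "rotate d w = w"
  shows False
proof -
  define n where "n = length w"
  have n0: "n > 0" using d n_def by auto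
  have step: "w ! ((x + d) mod n) = w ! (x mod n)" for x
  proof -
    have "rotate d w ! (x mod n) = w ! ((d + x mod n) mod n)"
      using nth_rotate[of "x mod n" w d] n0 n_def by simp
    then show ?thesis using hfix by (simp add: mod_add_right_eq add.commute)
  qed
  have stepq: "w ! ((x + d * q) mod n) = w ! (x mod n)" for x q
  proof (induction q)
    case 0 then show ?case by simp
  next
    case (Suc q)
    have "w ! ((x + d * Suc q) mod n) = w ! ((x + d * q + d) mod n)" by (simp add: algebra_simps)
    also have "\<dots> = w ! ((x + d * q) mod n)" using step by simp
    finally show ?case using Suc.IH by simp
  qed
  define g where "g = gcd d n"
  obtain a b where ab: "d * a = n * b + g" using bezout_nat[of d n] d unfolding g_def by auto
  have gstep: "w ! ((x + g) mod n) = w ! (x mod n)" for x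
  proof -
    have "(x + d * a) mod n = (x + g) mod n" using ab
      by (metis add.assoc add.commute mod_mult_self2)
    then show ?thesis using stepq[of x a] by simp
  qed
  have gq: "w ! ((x + g * q) mod n) = w ! (x mod n)" for x q
  proof (induction q)
    case 0 then show ?case by simp
  next
    case (Suc q)
    have "w ! ((x + g * Suc q) mod n) = w ! ((x + g * q + g) mod n)" by (simp add: algebra_simps)
    also have "\<dots> = w ! ((x + g * q) mod n)" using gstep by simp
    finally show ?case using Suc.IH by simp
  qed
  have g0: "g > 0" using d g_def by simp
  have gdvd: "g dvd n" unfolding g_def by simp
  have gle: "g \<le> d" unfolding g_def using d by (simp add: gcd_le1_nat)
  have gn: "g < n" using gle d n_def by simp
  have gmodn: "x mod g < n" for x using gn g0 by (meson order.strict_trans mod_less_divisor)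
  define q where "q = n div g"
  have nq: "n = q * g" using gdvd q_def by simp
  have q2: "q \<noteq> 1" using nq gn by auto
  have "w = concat (replicate q (take g w))"
  proof (rule nth_equalityI)
    show "length w = length (concat (replicate q (take g w)))"
      using nq gn n_def by (simp add: length_concat sum_list_replicate min_def)
  next
    fix x assume "x < length w"
    then have x: "x < n" using n_def by simp
    have lt: "length (take g w) = g" using gn n_def by simp
    have "concat (replicate q (take g w)) ! x = take g w ! (x mod g)"
      using concat_replicate_nth[of x q "take g w"] lt x nq by simp
    also have "\<dots> = w ! (x mod g)" using g0 by simp
    also have "\<dots> = w ! ((x mod g + g * (x div g)) mod n)"
      using gq[of "x mod g" "x div g"] gmodn by simp
    also have "\<dots> = w ! x" using x by simp
    finally show "w ! x = concat (replicate q (take g w)) ! x" by simp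
  qed
  then show False using prim q2 unfolding primitive_def by blast
qed

lemma rotate_distinct:
  assumes prim: "primitive w" and ij: "i < j" "j < length w"
  shows "rotate i w \<noteq> rotate j w"
proof
  assume eq: "rotate i w = rotate j w"
  define n where "n = length w"
  have "rotate (n - i) (rotate i w) = rotate (n - i) (rotate j w)" using eq by simp
  then have "rotate n w = rotate (n - i + j) w" using ij n_def by (simp add: rotate_rotate)
  moreover have "rotate n w = w" using n_def by (simp add: rotate_conv_mod[of n])
  moreover have "rotate (n - i + j) w = rotate (j - i) w"
  proof -
    have "n - i + j = (j - i) + n" using ij n_def by simp
    then show ?thesis by (metis rotate_conv_mod mod_add_self2 n_def)
  qed
  ultimately have "rotate (j - i) w = w" by simp
  moreover have "j - i < length w" using ij by linarith
  ultimately show False using rotate_fixed_not_primitive[OF prim, of "j - i"] ij by simp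
qed


definition tp :: "'b list list \<Rightarrow> nat \<Rightarrow> nat" where
  "tp pis h = h + (\<Sum>i<h. length (pis ! i))"

lemma tp_Suc: "tp pis (Suc h) = tp pis h + length (pis ! h) + 1"
  unfolding tp_def by simp

lemma tp_0[simp]: "tp pis 0 = 0"
  unfolding tp_def by simp

lemma tp_mono: "h \<le> h' \<Longrightarrow> tp pis h \<le> tp pis h'"
proof (induction h' rule: dec_induct)
  case base then show ?case by simp
next
  case (step m) then show ?case using tp_Suc[of pis m] by simp
qed

lemma fw_snoc: "factor_word as (ps @ [p]) = factor_word as ps @ p @ [as ! Suc (length ps)]"
proof -
  have u: "[0..<length (ps @ [p])] = [0..<length ps] @ [length ps]" by simp
  have m: "map (\<lambda>i. (ps @ [p]) ! i @ [as ! Suc i]) [0..<length ps] = map (\<lambda>i. ps ! i @ [as ! Suc i]) [0..<length ps]"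
    by (rule map_cong[OF refl]) (simp add: nth_append)
  have "factor_word as (ps @ [p]) = [as!0] @ concat (map (\<lambda>i. (ps @ [p]) ! i @ [as ! Suc i]) ([0..<length ps] @ [length ps]))"
    unfolding factor_word_def u ..
  also have "\<dots> = [as!0] @ concat (map (\<lambda>i. (ps @ [p]) ! i @ [as ! Suc i]) [0..<length ps]) @ p @ [as ! Suc (length ps)]"
    by simp
  also have "\<dots> = [as!0] @ concat (map (\<lambda>i. ps ! i @ [as ! Suc i]) [0..<length ps]) @ p @ [as ! Suc (length ps)]"
    by (simp only: m)
  finally show ?thesis unfolding factor_word_def by simp
qed

lemma fw_take_Suc:
  "h < length pis \<Longrightarrow> factor_word as (take (Suc h) pis) = factor_word as (take h pis) @ pis ! h @ [as ! Suc h]"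
  using fw_snoc[of as "take h pis" "pis ! h"] by (simp add: take_Suc_conv_app_nth)

lemma fw_take_len:
  "h \<le> length pis \<Longrightarrow> length (factor_word as (take h pis)) = tp pis h + 1"
proof (induction h)
  case 0 then show ?case by (simp add: factor_word_def)
next
  case (Suc h)
  then show ?case using fw_take_Suc[of h pis as] tp_Suc[of pis h] by simp
qed

lemma fw_take_last:
  "h \<le> length pis \<Longrightarrow> factor_word as (take h pis) ! tp pis h = as ! h"
proof (cases h)
  case 0 then show ?thesis by (simp add: factor_word_def)
next
  case (Suc h')
  assume "h \<le> length pis"
  then have h': "h' < length pis" using Suc by simp
  have "factor_word as (take h pis) = factor_word as (take h' pis) @ pis ! h' @ [as ! Suc h']"
    using fw_take_Suc[OF h'] Suc by simp
  moreover have "tp pis h = length (factor_word as (take h' pis) @ pis ! h')"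
    using fw_take_len[of h' pis as] h' tp_Suc[of pis h'] Suc by simp
  ultimately show ?thesis using Suc by (simp add: nth_append)
qed

lemma fw_take_prefix:
  "h \<le> m \<Longrightarrow> m \<le> length pis \<Longrightarrow> \<exists>r. factor_word as (take m pis) = factor_word as (take h pis) @ r"
proof (induction m rule: dec_induct)
  case base then show ?case by auto
next
  case (step m)
  then obtain r where "factor_word as (take m pis) = factor_word as (take h pis) @ r" by auto
  then show ?case using fw_take_Suc[of m pis as] step by auto
qed

lemma fw_marker:
  assumes "h \<le> length pis"
  shows "factor_word as pis ! tp pis h = as ! h"
proof -
  obtain r where r: "factor_word as pis = factor_word as (take h pis) @ r"
    using fw_take_prefix[of h "length pis" pis as] assms by auto
  show ?thesis using r fw_take_last[OF assms, of as] fw_take_len[OF assms, of as] by (simp add: nth_append)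
qed

lemma fw_inner:
  assumes "h < length pis" "i < length (pis ! h)"
  shows "factor_word as pis ! (tp pis h + 1 + i) = pis ! h ! i"
proof -
  obtain r where r: "factor_word as pis = factor_word as (take (Suc h) pis) @ r"
    using fw_take_prefix[of "Suc h" "length pis" pis as] assms by auto
  have e: "factor_word as (take (Suc h) pis) = factor_word as (take h pis) @ pis ! h @ [as ! Suc h]"
    using fw_take_Suc[OF assms(1)] by simp
  have l: "length (factor_word as (take h pis)) = tp pis h + 1" using fw_take_len[of h pis as] assms by simp
  show ?thesis using r e l assms by (simp add: nth_append)
qed

lemma fw_length: "length (factor_word as pis) = tp pis (length pis) + 1"
  using fw_take_len[of "length pis" pis as] by simp

locale pcw =
  fixes w :: "'a::linorder list"
  assumes prim: "primitive w" and pc: "sorted_wrt (\<ge>) (bw w)"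
begin

definition rot :: "nat \<Rightarrow> 'a list" where "rot t = rotate t w"
definition rk :: "nat \<Rightarrow> nat" where "rk t = card {j. j < length w \<and> rot j < rot t}"
definition ltc :: "'a \<Rightarrow> nat" where "ltc a = card {j. j < length w \<and> w!j < a}"
definition gtc :: "'a \<Rightarrow> nat" where "gtc a = card {j. j < length w \<and> w!j > a}"
definition eqc :: "'a \<Rightarrow> nat" where "eqc a = card {j. j < length w \<and> w!j = a}"
definition Ec :: "nat \<Rightarrow> nat" where
  "Ec t = card {j. j < length w \<and> w!j = w!(t mod length w) \<and> rot j < rot t}"

lemma n_pos: "length w > 0"
  using prim unfolding primitive_def by simp

lemma rot_mod: "rot (t mod length w) = rot t"
  unfolding rot_def by (metis rotate_conv_mod)

lemma length_rot[simp]: "length (rot t) = length w"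
  unfolding rot_def by simp

lemma rot_nth: "i < length w \<Longrightarrow> rot t ! i = w ! ((t + i) mod length w)"
  unfolding rot_def by (simp add: nth_rotate)

lemma rot_Suc: "rot (Suc t) = tl (rot t) @ [w ! (t mod length w)]"
proof -
  have ne: "rot t \<noteq> []" using n_pos by (metis length_rot length_greater_0_conv)
  have "hd (rot t) = w ! (t mod length w)"
    using rot_nth[of 0 t] n_pos ne by (simp add: hd_conv_nth)
  moreover have "rot (Suc t) = rotate1 (rot t)" unfolding rot_def by (simp add: rotate_Suc)
  ultimately show ?thesis using ne by (cases "rot t") auto
qed

lemma rot_Cons: "rot t = w ! (t mod length w) # tl (rot t)"
proof -
  have ne: "rot t \<noteq> []" using n_pos by (metis length_rot length_greater_0_conv)
  have "hd (rot t) = w ! (t mod length w)"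
    using rot_nth[of 0 t] n_pos ne by (simp add: hd_conv_nth)
  then show ?thesis using ne by (cases "rot t") auto
qed

lemma last_rot_Suc: "last (rot (Suc t)) = w ! (t mod length w)"
  by (simp add: rot_Suc)

lemma rot_conj: "rot t \<in> conjugates w"
  unfolding conjugates_def rot_def using n_pos
  by (auto intro!: exI[of _ "t mod length w"] simp: rotate_conv_mod[of t])

lemma finite_conj: "finite (conjugates w)"
proof -
  have "conjugates w = (\<lambda>i. rotate i w) ` {..<length w}" unfolding conjugates_def by auto
  then show ?thesis by simp
qed

lemma pc_last:
  assumes "last (rot u) > last (rot v)"
  shows "rot u < rot v"
proof (rule ccontr)
  assume nl: "\<not> rot u < rot v"
  have ne: "rot u \<noteq> rot v" using assms by auto
  then have vu: "rot v < rot u" using nl by auto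
  define sl where "sl = sorted_list_of_set (conjugates w)"
  have setsl: "set sl = conjugates w" using finite_conj sl_def by simp
  have ssl: "sorted_wrt (<) sl" using sl_def by simp
  obtain a where a: "a < length sl" "sl ! a = rot u" using rot_conj[of u] setsl by (metis in_set_conv_nth)
  obtain b where b: "b < length sl" "sl ! b = rot v" using rot_conj[of v] setsl by (metis in_set_conv_nth)
  have "b < a"
  proof (rule ccontr)
    assume "\<not> b < a"
    then have "a < b \<or> a = b" by auto
    then show False
    proof
      assume "a < b"
      then have "sl ! a < sl ! b" using ssl b unfolding sorted_wrt_iff_nth_less by blast
      then show False using a b vu by simp
    next
      assume "a = b" then show False using a b ne by simp
    qed
  qed
  have "map last sl ! b \<ge> map last sl ! a"
  proof -
    have "\<forall>i j. i < j \<longrightarrow> j < length sl \<longrightarrow> last (sl ! j) \<le> last (sl ! i)"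
      using pc unfolding bw_def sl_def[symmetric] sorted_wrt_iff_nth_less by auto
    then have "last (sl ! a) \<le> last (sl ! b)" using \<open>b < a\<close> a(1) by blast
    then show ?thesis using a(1) b(1) by simp
  qed
  then have "last (rot v) \<ge> last (rot u)" using a b by simp
  then show False using assms by simp
qed

lemma shift_same:
  assumes "w ! (j mod length w) = w ! (t mod length w)"
  shows "(rot (Suc j) < rot (Suc t)) = (rot j < rot t)"
proof -
  have "rot j < rot t \<longleftrightarrow> tl (rot j) < tl (rot t)"
    using rot_Cons[of j] rot_Cons[of t] assms by (metis Cons_less_Cons less_irrefl)
  also have "\<dots> \<longleftrightarrow> tl (rot j) @ [w ! (j mod length w)] < tl (rot t) @ [w ! (t mod length w)]"
    using assms lex_snoc_same[of "tl (rot j)" "tl (rot t)"] by simp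
  finally show ?thesis by (simp add: rot_Suc)
qed

lemma rk_lt_n: "rk t < length w"
proof -
  have "{j. j < length w \<and> rot j < rot t} \<subseteq> {..<length w} - {t mod length w}"
    using rot_mod[of t] by auto
  moreover have "card ({..<length w} - {t mod length w}) = length w - 1"
    using n_pos by simp
  ultimately have "rk t \<le> length w - 1" unfolding rk_def
    by (metis (no_types, lifting) card_mono finite_Diff finite_lessThan)
  then show ?thesis using n_pos by linarith
qed

lemma rk_mono: "rot a < rot b \<Longrightarrow> rk a < rk b"
proof -
  assume ab: "rot a < rot b"
  have "{j. j < length w \<and> rot j < rot a} \<subset> {j. j < length w \<and> rot j < rot b}"
  proof
    show "{j. j < length w \<and> rot j < rot a} \<subseteq> {j. j < length w \<and> rot j < rot b}"
      using ab by auto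
    have "a mod length w \<in> {j. j < length w \<and> rot j < rot b}" using ab rot_mod[of a] n_pos by simp
    moreover have "a mod length w \<notin> {j. j < length w \<and> rot j < rot a}" using rot_mod[of a] by simp
    ultimately show "{j. j < length w \<and> rot j < rot a} \<noteq> {j. j < length w \<and> rot j < rot b}" by blast
  qed
  then show ?thesis unfolding rk_def by (simp add: psubset_card_mono)
qed

lemma rk_mod: "rk (t mod length w) = rk t"
  unfolding rk_def using rot_mod by simp

lemma rk_inj: "inj_on rk {..<length w}"
proof (rule inj_onI)
  fix i j assume i: "i \<in> {..<length w}" and j: "j \<in> {..<length w}" and e: "rk i = rk j"
  show "i = j"
  proof (rule ccontr)
    assume "i \<noteq> j"
    then have "i < j \<or> j < i" by auto
    then have "rot i \<noteq> rot j" using i j rotate_distinct[OF prim, of i j] rotate_distinct[OF prim, of j i]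
      unfolding rot_def by auto
    then have "rot i < rot j \<or> rot j < rot i" by auto
    then show False using rk_mono e by fastforce
  qed
qed

lemma rk_image: "rk ` {..<length w} = {..<length w}"
  using endo_inj_surj[of "{..<length w}" rk] rk_inj rk_lt_n by auto

lemma rk_split: "rk t = ltc (w ! (t mod length w)) + Ec t"
proof -
  define x where "x = w ! (t mod length w)"
  have "{j. j < length w \<and> rot j < rot t} =
        {j. j < length w \<and> w!j < x} \<union> {j. j < length w \<and> w!j = x \<and> rot j < rot t}"
  proof -
    have "rot j < rot t \<longleftrightarrow> w!j < x \<or> (w!j = x \<and> rot j < rot t)" if "j < length w" for j
    proof -
      have "rot j = w!j # tl (rot j)" using rot_Cons[of j] that by simp
      moreover have "rot t = x # tl (rot t)" using rot_Cons[of t] x_def by simp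
      ultimately show ?thesis by (metis Cons_less_Cons)
    qed
    then show ?thesis by auto
  qed
  moreover have "{j. j < length w \<and> w!j < x} \<inter> {j. j < length w \<and> w!j = x \<and> rot j < rot t} = {}"
    by auto
  ultimately show ?thesis unfolding rk_def ltc_def Ec_def x_def[symmetric]
    by (simp add: card_Un_disjoint)
qed

lemma rk_Suc_split: "rk (Suc t) = gtc (w ! (t mod length w)) + Ec t"
proof -
  define x where "x = w ! (t mod length w)"
  define f where "f j = Suc j mod length w" for j
  have injf: "inj_on f {j. j < length w \<and> rot (Suc j) < rot (Suc t)}"
  proof (rule inj_onI)
    fix a b assume a: "a \<in> {j. j < length w \<and> rot (Suc j) < rot (Suc t)}"
      and b: "b \<in> {j. j < length w \<and> rot (Suc j) < rot (Suc t)}" and e: "f a = f b"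
    have "Suc a mod length w = Suc b mod length w" using e f_def by simp
    then show "a = b" using a b by (auto simp: mod_Suc split: if_splits)
  qed
  have img: "{j. j < length w \<and> rot j < rot (Suc t)} = f ` {j. j < length w \<and> rot (Suc j) < rot (Suc t)}"
  proof
    show "f ` {j. j < length w \<and> rot (Suc j) < rot (Suc t)} \<subseteq> {j. j < length w \<and> rot j < rot (Suc t)}"
      using rot_mod n_pos unfolding f_def by auto
  next
    show "{j. j < length w \<and> rot j < rot (Suc t)} \<subseteq> f ` {j. j < length w \<and> rot (Suc j) < rot (Suc t)}"
    proof
      fix j assume j: "j \<in> {j. j < length w \<and> rot j < rot (Suc t)}"
      define i where "i = (j + length w - 1) mod length w"
      have i: "i < length w" using n_pos i_def by simp
      have "Suc i mod length w = j"
      proof -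
        have "Suc i mod length w = (Suc (j + length w - 1)) mod length w"
          unfolding i_def by (simp add: mod_Suc_eq)
        also have "\<dots> = (j + length w) mod length w" using n_pos by simp
        finally show ?thesis using j by simp
      qed
      then have "f i = j" using f_def by simp
      moreover have "rot (Suc i) < rot (Suc t)" using j rot_mod[of "Suc i"] \<open>Suc i mod length w = j\<close> by simp
      ultimately show "j \<in> f ` {j. j < length w \<and> rot (Suc j) < rot (Suc t)}" using i by blast
    qed
  qed
  have "rk (Suc t) = card {j. j < length w \<and> rot (Suc j) < rot (Suc t)}"
    unfolding rk_def using img injf by (simp add: card_image)
  also have "{j. j < length w \<and> rot (Suc j) < rot (Suc t)} =
        {j. j < length w \<and> w!j > x} \<union> {j. j < length w \<and> w!j = x \<and> rot j < rot t}"
  proof -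
    have "rot (Suc j) < rot (Suc t) \<longleftrightarrow> w!j > x \<or> (w!j = x \<and> rot j < rot t)" if "j < length w" for j
    proof -
      have lj: "last (rot (Suc j)) = w!j" using last_rot_Suc[of j] that by simp
      have lt: "last (rot (Suc t)) = x" using last_rot_Suc[of t] x_def by simp
      consider "w!j > x" | "w!j < x" | "w!j = x" using less_linear[of x "w!j"] by blast
      then show ?thesis
      proof cases
        case 1 then show ?thesis using pc_last[of "Suc t" "Suc j"] lj lt by simp
      next
        case 2 then have "rot (Suc t) < rot (Suc j)" using pc_last[of "Suc j" "Suc t"] lj lt by simp
        then show ?thesis using 2 by auto
      next
        case 3 then show ?thesis using shift_same[of j t] that x_def by simp
      qed
    qed
    then show ?thesis by auto
  qed
  also have "card ({j. j < length w \<and> w!j > x} \<union> {j. j < length w \<and> w!j = x \<and> rot j < rot t})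
     = card {j. j < length w \<and> w!j > x} + card {j. j < length w \<and> w!j = x \<and> rot j < rot t}"
    by (rule card_Un_disjoint) auto
  finally show ?thesis unfolding gtc_def Ec_def x_def[symmetric] .
qed

lemma Ec_less: "Ec t < eqc (w ! (t mod length w))"
proof -
  have "{j. j < length w \<and> w!j = w!(t mod length w) \<and> rot j < rot t} \<subset> {j. j < length w \<and> w!j = w!(t mod length w)}"
  proof
    show "{j. j < length w \<and> w!j = w!(t mod length w) \<and> rot j < rot t} \<subseteq> {j. j < length w \<and> w!j = w!(t mod length w)}" by auto
    have "t mod length w \<in> {j. j < length w \<and> w!j = w!(t mod length w)}" using n_pos by simp
    moreover have "t mod length w \<notin> {j. j < length w \<and> w!j = w!(t mod length w) \<and> rot j < rot t}"
      using rot_mod[of t] by simp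
    ultimately show "{j. j < length w \<and> w!j = w!(t mod length w) \<and> rot j < rot t} \<noteq> {j. j < length w \<and> w!j = w!(t mod length w)}" by blast
  qed
  then show ?thesis unfolding Ec_def eqc_def by (simp add: psubset_card_mono)
qed

lemma cnt_sum: "ltc x + eqc x + gtc x = length w"
proof -
  have "{..<length w} = {j. j < length w \<and> w!j < x} \<union> {j. j < length w \<and> w!j = x} \<union> {j. j < length w \<and> w!j > x}"
    by auto
  then have "length w = card ({j. j < length w \<and> w!j < x} \<union> {j. j < length w \<and> w!j = x} \<union> {j. j < length w \<and> w!j > x})"
    by (metis card_lessThan)
  also have "\<dots> = card ({j. j < length w \<and> w!j < x} \<union> {j. j < length w \<and> w!j = x}) + gtc x"
    unfolding gtc_def by (rule card_Un_disjoint) auto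
  also have "card ({j. j < length w \<and> w!j < x} \<union> {j. j < length w \<and> w!j = x}) = ltc x + eqc x"
    unfolding ltc_def eqc_def by (rule card_Un_disjoint) auto
  finally show ?thesis by simp
qed

lemma gtc_ge: "x < y \<Longrightarrow> gtc y + eqc y \<le> gtc x"
proof -
  assume xy: "x < y"
  have "{j. j < length w \<and> w!j > y} \<union> {j. j < length w \<and> w!j = y} \<subseteq> {j. j < length w \<and> w!j > x}"
    using xy by auto
  then have "card ({j. j < length w \<and> w!j > y} \<union> {j. j < length w \<and> w!j = y}) \<le> gtc x"
    unfolding gtc_def by (simp add: card_mono)
  moreover have "card ({j. j < length w \<and> w!j > y} \<union> {j. j < length w \<and> w!j = y}) = gtc y + eqc y"
    unfolding gtc_def eqc_def by (subst card_Un_disjoint) auto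
  ultimately show ?thesis by simp
qed


lemma rk_Suc_eq: "rk (Suc t) + ltc (w ! (t mod length w)) = rk t + gtc (w ! (t mod length w))"
  using rk_split[of t] rk_Suc_split[of t] by simp

lemma rk_bounds:
  "ltc (w ! (t mod length w)) \<le> rk t"
  "rk t < ltc (w ! (t mod length w)) + eqc (w ! (t mod length w))"
  "gtc (w ! (t mod length w)) \<le> rk (Suc t)"
  "rk (Suc t) < gtc (w ! (t mod length w)) + eqc (w ! (t mod length w))"
  using rk_split[of t] rk_Suc_split[of t] Ec_less[of t] by simp_all

definition cc :: nat where "cc = (SOME c. c < length w \<and> rk c = length w - 1 - rk 0)"

lemma cc_prop: "cc < length w \<and> rk cc = length w - 1 - rk 0"
proof -
  have "length w - 1 - rk 0 \<in> rk ` {..<length w}" using rk_image n_pos by auto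
  then have "\<exists>c. c < length w \<and> rk c = length w - 1 - rk 0" by force
  then show ?thesis unfolding cc_def by (rule someI_ex)
qed

lemma rev_ident:
  "t \<le> length w \<Longrightarrow> rk (cc + length w - t) + rk t = length w - 1 \<and>
     (\<forall>u<t. w ! ((cc + length w - u - 1) mod length w) = w ! u)"
proof (induction t)
  case 0
  have "rk (cc + length w) = rk cc"
    using rk_mod[of "cc + length w"] rk_mod[of cc] by simp
  then show ?case using cc_prop rk_lt_n[of 0] by simp
next
  case (Suc t)
  define n where "n = length w"
  have t: "t < n" using Suc.prems n_def by simp
  have IH: "rk (cc + n - t) + rk t = n - 1" "\<forall>u<t. w ! ((cc + n - u - 1) mod n) = w ! u"
    using Suc.IH Suc.prems n_def by auto
  define u where "u = cc + n - Suc t"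
  have su: "Suc u = cc + n - t" using t u_def by simp
  define x where "x = w ! (t mod n)"
  define y where "y = w ! (u mod n)"
  have xt: "x = w ! t" using t x_def by simp
  have b1: "gtc y \<le> rk (Suc u)" "rk (Suc u) < gtc y + eqc y"
    using rk_bounds(3,4)[of u] y_def n_def by auto
  have b2: "ltc x \<le> rk t" "rk t < ltc x + eqc x"
    using rk_bounds(1,2)[of t] x_def n_def by auto
  have cs: "ltc x + eqc x + gtc x = n" using cnt_sum n_def by simp
  have ru: "rk (Suc u) = n - 1 - rk t" using IH(1) su by simp
  have b3: "gtc x \<le> rk (Suc u)" "rk (Suc u) < gtc x + eqc x"
    using ru b2 cs by linarith+
  have xy: "x = y"
  proof (rule ccontr)
    assume "x \<noteq> y"
    then have "x < y \<or> y < x" by auto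
    then show False
    proof
      assume "x < y"
      then have "gtc y + eqc y \<le> gtc x" by (rule gtc_ge)
      then show False using b1 b3 by linarith
    next
      assume "y < x"
      then have "gtc x + eqc x \<le> gtc y" by (rule gtc_ge)
      then show False using b1 b3 by linarith
    qed
  qed
  have e1: "rk (Suc u) + ltc x = rk u + gtc x" using rk_Suc_eq[of u] xy y_def n_def by simp
  have e2: "rk (Suc t) + ltc x = rk t + gtc x" using rk_Suc_eq[of t] x_def n_def by simp
  have "rk u + rk (Suc t) = n - 1" using e1 e2 ru rk_lt_n[of t] n_def by linarith
  moreover have "\<forall>v<Suc t. w ! ((cc + n - v - 1) mod n) = w ! v"
  proof (intro allI impI)
    fix v assume "v < Suc t"
    then have "v < t \<or> v = t" by auto
    then show "w ! ((cc + n - v - 1) mod n) = w ! v"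
    proof
      assume "v < t" then show ?thesis using IH(2) by simp
    next
      assume "v = t"
      have "cc + n - t - 1 = u" using u_def by simp
      then show ?thesis using \<open>v = t\<close> xy xt y_def by simp
    qed
  qed
  ultimately show ?case using u_def n_def by simp
qed

lemma letter_ident: "u < length w \<Longrightarrow> w ! ((cc + length w - u - 1) mod length w) = w ! u"
  using rev_ident[of "length w"] by simp

lemma rk_ident: "t \<le> length w \<Longrightarrow> rk (cc + length w - t) + rk t = length w - 1"
  using rev_ident by simp

end


locale pcf = pcw +
  fixes as :: "'a list" and pis :: "'a list list"
  assumes psf: "palindromic_special_factorization w as pis"
begin

lemma w_fw: "w = factor_word as pis"
  using psf unfolding palindromic_special_factorization_def special_factorization_def by simp

lemma len_as: "length as = Suc (length pis)"
  using psf unfolding palindromic_special_factorization_def special_factorization_def by auto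

lemma sorted_as: "sorted_wrt (<) as"
  using psf unfolding palindromic_special_factorization_def special_factorization_def by simp

lemma set_as: "set as = set w"
  using psf unfolding palindromic_special_factorization_def special_factorization_def by simp

lemma len_w: "length w = tp pis (length pis) + 1"
  using fw_length[of as pis] w_fw by simp

lemma mark: "h \<le> length pis \<Longrightarrow> w ! tp pis h = as ! h"
  using fw_marker w_fw by metis

lemma inner: "h < length pis \<Longrightarrow> i < length (pis ! h) \<Longrightarrow> w ! (tp pis h + 1 + i) = pis ! h ! i"
  using fw_inner w_fw by metis

lemma pal: "h < length pis \<Longrightarrow> i < length (pis ! h) \<Longrightarrow> pis ! h ! i = pis ! h ! (length (pis ! h) - 1 - i)"
proof -
  assume h: "h < length pis" and i: "i < length (pis ! h)"
  have "palindrome (pis ! h)" using psf h unfolding palindromic_special_factorization_def by auto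
  then have "rev (pis ! h) = pis ! h" unfolding palindrome_def by simp
  then have "pis ! h ! i = rev (pis ! h) ! i" by simp
  also have "\<dots> = pis ! h ! (length (pis ! h) - Suc i)" using i by (simp add: rev_nth)
  finally show ?thesis by simp
qed

lemma as_less: "h < length pis \<Longrightarrow> as ! h < as ! Suc h"
  using sorted_as len_as unfolding sorted_wrt_iff_nth_less by auto

lemma tp_le: "h \<le> length pis \<Longrightarrow> tp pis h \<le> length w - 1"
  using tp_mono[of h "length pis" pis] len_w by simp

lemma ineq:
  assumes h: "h < length pis" and j: "j \<le> length (pis ! h)"
  shows "length w \<le> rk (tp pis h + 1 + j) + rk (tp pis (Suc h) - j)"
proof -
  define n where "n = length w"
  define m where "m = length (pis ! h)"
  define t where "t = tp pis h + 1 + j"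
  define T1 where "T1 = tp pis (Suc h)"
  have T1: "T1 = tp pis h + m + 1" using T1_def m_def tp_Suc by simp
  have T1n: "T1 \<le> n - 1" using tp_le[of "Suc h"] h T1_def n_def by simp
  have tT1: "t \<le> T1" using T1 t_def j m_def by simp
  have tn: "t < n" using tT1 T1n n_pos n_def by linarith
  have jt: "j < t" using t_def by simp
  have ri: "rk (cc + n - t) + rk t = n - 1" using rk_ident[of t] tn n_def by simp
  have cmp: "rot (cc + n - t) < rot (T1 - j)"
  proof (rule lex_prefix_less[where j = j])
    show "j < length (rot (cc + n - t))" using jt tn n_def by simp
    show "j < length (rot (T1 - j))" using jt tn n_def by simp
    have A: "rot (cc + n - t) ! i = w ! (t - 1 - i)" if "i \<le> j" for i
    proof -
      have "rot (cc + n - t) ! i = w ! ((cc + n - t + i) mod n)"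
        using rot_nth[of i "cc + n - t"] that jt tn n_def by simp
      moreover have "cc + n - t + i = cc + n - (t - 1 - i) - 1" using that jt tn by simp
      moreover have "t - 1 - i < n" using tn by simp
      ultimately show ?thesis using letter_ident[of "t - 1 - i"] n_def by simp
    qed
    have B: "rot (T1 - j) ! i = w ! (T1 - j + i)" if "i \<le> j" for i
    proof -
      have "rot (T1 - j) ! i = w ! ((T1 - j + i) mod n)"
        using rot_nth[of i "T1 - j"] that jt tn n_def by simp
      moreover have "T1 - j + i < n" using that T1n tT1 jt tn by linarith
      ultimately show ?thesis by simp
    qed
    show "take j (rot (cc + n - t)) = take j (rot (T1 - j))"
    proof (rule nth_equalityI)
      show "length (take j (rot (cc + n - t))) = length (take j (rot (T1 - j)))" by simp
    next
      fix i assume "i < length (take j (rot (cc + n - t)))"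
      then have i: "i < j" using jt tn n_def by simp
      have "take j (rot (cc + n - t)) ! i = w ! (t - 1 - i)" using A[of i] i by simp
      also have "t - 1 - i = tp pis h + 1 + (j - 1 - i)" using t_def i by simp
      also have "w ! (tp pis h + 1 + (j - 1 - i)) = pis ! h ! (j - 1 - i)"
        using inner[OF h, of "j - 1 - i"] i j m_def by simp
      also have "\<dots> = pis ! h ! (m - j + i)"
        using pal[OF h, of "j - 1 - i"] i j m_def by simp
      also have "\<dots> = w ! (tp pis h + 1 + (m - j + i))"
        using inner[OF h, of "m - j + i"] i j m_def by simp
      also have "tp pis h + 1 + (m - j + i) = T1 - j + i" using T1 i j m_def by simp
      also have "w ! (T1 - j + i) = take j (rot (T1 - j)) ! i" using B[of i] i by simp
      finally show "take j (rot (cc + n - t)) ! i = take j (rot (T1 - j)) ! i" .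
    qed
    have "rot (cc + n - t) ! j = w ! (tp pis h)" using A[of j] t_def by simp
    also have "\<dots> = as ! h" using mark[of h] h by simp
    also have "\<dots> < as ! Suc h" using as_less[OF h] .
    also have "as ! Suc h = w ! T1" using mark[of "Suc h"] h T1_def by simp
    also have "\<dots> = rot (T1 - j) ! j" using B[of j] tT1 jt by simp
    finally show "rot (cc + n - t) ! j < rot (T1 - j) ! j" .
  qed
  have "rk (cc + n - t) < rk (T1 - j)" using rk_mono[OF cmp] .
  then have "n \<le> rk t + rk (T1 - j)" using ri n_pos n_def by linarith
  then show ?thesis using t_def T1_def n_def by simp
qed

end

context pcf
begin

definition S :: "nat \<Rightarrow> nat" where
  "S h = (\<Sum>t\<in>{tp pis h + 1..<tp pis (Suc h) + 1}. rk t)"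

lemma seg_ineq:
  assumes h: "h < length pis"
  shows "length w * (tp pis (Suc h) - tp pis h) \<le> 2 * S h"
proof -
  define a where "a = tp pis h + 1"
  define b where "b = tp pis (Suc h) + 1"
  have ab: "a \<le> b" using tp_Suc[of pis h] a_def b_def by simp
  have rev: "(\<Sum>t\<in>{a..<b}. rk (b + a - Suc t)) = S h"
    unfolding S_def a_def[symmetric] b_def[symmetric] by (rule sum.atLeastLessThan_rev[symmetric])
  have pt: "length w \<le> rk t + rk (b + a - Suc t)" if t: "t \<in> {a..<b}" for t
  proof -
    define j where "j = t - a"
    have j: "j \<le> length (pis ! h)" using t j_def a_def b_def tp_Suc[of pis h] by auto
    have "t = tp pis h + 1 + j" using t j_def a_def by simp
    moreover have "b + a - Suc t = tp pis (Suc h) - j" using t j_def a_def b_def by auto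
    ultimately show ?thesis using ineq[OF h j] by simp
  qed
  have "(\<Sum>t\<in>{a..<b}. length w) \<le> (\<Sum>t\<in>{a..<b}. rk t + rk (b + a - Suc t))"
    by (rule sum_mono) (rule pt)
  also have "\<dots> = S h + S h" using rev unfolding S_def a_def[symmetric] b_def[symmetric]
    by (simp add: sum.distrib)
  finally have "(b - a) * length w \<le> 2 * S h" by simp
  moreover have "b - a = tp pis (Suc h) - tp pis h" using a_def b_def by simp
  ultimately show ?thesis by (simp add: mult.commute)
qed

lemma S_total: "k \<le> length pis \<Longrightarrow> (\<Sum>h<k. S h) = (\<Sum>t\<in>{1..<tp pis k + 1}. rk t)"
proof (induction k)
  case 0 then show ?case by simp
next
  case (Suc k)
  have "(\<Sum>h<Suc k. S h) = (\<Sum>t\<in>{1..<tp pis k + 1}. rk t) + S k" using Suc by simp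
  also have "\<dots> = (\<Sum>t\<in>{1..<tp pis (Suc k) + 1}. rk t)"
    unfolding S_def by (rule sum.atLeastLessThan_concat) (auto simp: tp_Suc)
  finally show ?case .
qed

lemma len_total: "(\<Sum>h<length pis. tp pis (Suc h) - tp pis h) = length w - 1"
proof -
  have "(\<Sum>h<length pis. tp pis (Suc h) - tp pis h) = (\<Sum>h<length pis. length (pis ! h) + 1)"
    by (rule sum.cong) (auto simp: tp_Suc)
  also have "\<dots> = tp pis (length pis)"
  proof -
    have "(\<Sum>h<k. length (pis ! h) + 1) = k + (\<Sum>h<k. length (pis ! h))" for k
      by (induction k) auto
    then show ?thesis unfolding tp_def by simp
  qed
  finally show ?thesis using len_w by simp
qed

lemma gauss2: "2 * (\<Sum>i<n. i) = n * (n - 1)" for n :: nat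
proof (induction n)
  case 0 then show ?case by simp
next
  case (Suc n) then show ?case by (cases n) (auto simp: algebra_simps)
qed

lemma rk_total: "2 * (\<Sum>t\<in>{1..<length w}. rk t) \<le> length w * (length w - 1)"
proof -
  have "(\<Sum>t\<in>{1..<length w}. rk t) \<le> (\<Sum>t<length w. rk t)"
    by (rule sum_mono2) auto
  also have "(\<Sum>t<length w. rk t) = (\<Sum>i\<in>rk ` {..<length w}. i)"
    using sum.reindex[OF rk_inj, of id] by simp
  also have "\<dots> = (\<Sum>i<length w. i)" using rk_image by simp
  finally show ?thesis using gauss2[of "length w"] by linarith
qed

lemma tight:
  assumes h: "h < length pis"
  shows "2 * S h = length w * (tp pis (Suc h) - tp pis h)"
proof (rule ccontr)
  assume ne: "2 * S h \<noteq> length w * (tp pis (Suc h) - tp pis h)"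
  define f where "f h = length w * (tp pis (Suc h) - tp pis h)" for h
  define g where "g h = 2 * S h" for h
  have le: "\<forall>x\<in>{..<length pis}. f x \<le> g x" using seg_ineq f_def g_def by auto
  have "\<exists>x\<in>{..<length pis}. f x < g x" using ne seg_ineq[OF h] h f_def g_def
    by (intro bexI[of _ h]) auto
  then have "(\<Sum>x<length pis. f x) < (\<Sum>x<length pis. g x)"
    using sum_strict_mono_ex1[of "{..<length pis}" f g] le by auto
  moreover have "(\<Sum>x<length pis. f x) = length w * (length w - 1)"
    unfolding f_def using len_total by (simp add: sum_distrib_left[symmetric])
  moreover have "(\<Sum>x<length pis. g x) = 2 * (\<Sum>t\<in>{1..<length w}. rk t)"
  proof -
    have "(\<Sum>x<length pis. g x) = 2 * (\<Sum>x<length pis. S x)" unfolding g_def by (simp add: sum_distrib_left)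
    moreover have e: "tp pis (length pis) + 1 = length w" using len_w by simp
    moreover have "(\<Sum>x<length pis. S x) = (\<Sum>t\<in>{1..<tp pis (length pis) + 1}. rk t)"
      using S_total[of "length pis"] by simp
    ultimately show ?thesis by (simp only:)
  qed
  ultimately show False using rk_total by linarith
qed

lemma count_eq: "count_list w a = card {j. j < length w \<and> w ! j = a}"
proof -
  have "count_list w a = card {i. i < length w \<and> a = w ! i}"
    by (simp add: count_list_eq_length_filter length_filter_conv_card)
  also have "{i. i < length w \<and> a = w ! i} = {j. j < length w \<and> w ! j = a}" by auto
  finally show ?thesis .
qed

lemma as_mono_iff: "i < length as \<Longrightarrow> i' < length as \<Longrightarrow> (as ! i < as ! i') = (i < i')"
proof -
  assume i: "i < length as" and i': "i' < length as"
  have lt: "a < b \<Longrightarrow> b < length as \<Longrightarrow> as ! a < as ! b" for a b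
    using sorted_as unfolding sorted_wrt_iff_nth_less by blast
  show ?thesis
  proof
    assume "as ! i < as ! i'"
    then show "i < i'" using lt[of i' i] i by (metis less_asym linorder_neqE_nat)
  next
    assume "i < i'" then show "as ! i < as ! i'" using lt i' by simp
  qed
qed

lemma as_inj: "i < length as \<Longrightarrow> i' < length as \<Longrightarrow> as ! i = as ! i' \<Longrightarrow> i = i'"
  using as_mono_iff[of i i'] as_mono_iff[of i' i] by (metis less_irrefl linorder_neqE_nat)

lemma letter_in_as: "j < length w \<Longrightarrow> \<exists>i < length as. w ! j = as ! i"
  using set_as by (metis in_set_conv_nth nth_mem)

lemma half:
  assumes s: "1 \<le> s" "s \<le> length pis" and e: "pis ! (s - 1) = []"
  shows "ltc (as ! s) = gtc (as ! (s - 1))"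
proof -
  define h where "h = s - 1"
  have h: "h < length pis" using s h_def by simp
  have Ts: "tp pis (Suc h) = tp pis h + 1" using tp_Suc[of pis h] e h_def by simp
  have "S h = rk (tp pis h + 1)" unfolding S_def Ts by simp
  then have two: "2 * rk (tp pis h + 1) = length w" using tight[OF h] Ts by simp
  have sh: "Suc h = s" using s h_def by simp
  have tn: "tp pis h + 1 < length w" using tp_le[of "Suc h"] h Ts n_pos by simp
  have th: "tp pis h < length w" using tn by simp
  have l1: "w ! ((tp pis h + 1) mod length w) = as ! s"
    using mark[of "Suc h"] h Ts sh tn by simp
  have l0: "w ! (tp pis h mod length w) = as ! h"
    using mark[of h] h th by simp
  have b1: "ltc (as ! s) \<le> rk (tp pis h + 1)" using rk_bounds(1)[of "tp pis h + 1"] l1 by simp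
  have b2: "gtc (as ! h) \<le> rk (tp pis h + 1)" using rk_bounds(3)[of "tp pis h"] l0 by simp
  have part: "ltc (as ! s) + gtc (as ! h) = length w"
  proof -
    have "{..<length w} = {j. j < length w \<and> w ! j < as ! s} \<union> {j. j < length w \<and> w ! j > as ! h}"
    proof -
      have "w ! j < as ! s \<or> w ! j > as ! h" if "j < length w" for j
      proof -
        have "w ! j \<in> set as" using that set_as by simp
        then obtain i where i: "i < length as" "w ! j = as ! i" by (metis in_set_conv_nth)
        have "i < s \<or> s \<le> i" by auto
        then show ?thesis
        proof
          assume "i < s"
          then have "i \<le> h" using h_def s by simp
          then have "as ! i \<le> as ! h" using sorted_as h len_as
            unfolding sorted_wrt_iff_nth_less by (cases "i = h") (auto intro: less_imp_le)
          then show ?thesis using as_less[OF h] sh i by auto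
        next
          assume "s \<le> i"
          then have "as ! s \<le> as ! i" using sorted_as i len_as
            unfolding sorted_wrt_iff_nth_less by (cases "i = s") (auto intro: less_imp_le)
          then show ?thesis using as_less[OF h] sh i by auto
        qed
      qed
      then show ?thesis by auto
    qed
    moreover have disj: "{j. j < length w \<and> w ! j < as ! s} \<inter> {j. j < length w \<and> w ! j > as ! h} = {}"
    proof (rule ccontr)
      assume "{j. j < length w \<and> w ! j < as ! s} \<inter> {j. j < length w \<and> w ! j > as ! h} \<noteq> {}"
      then obtain j where j: "j < length w" "w ! j < as ! s" "w ! j > as ! h" by auto
      obtain i where i: "i < length as" "w ! j = as ! i" using letter_in_as j(1) by auto
      have hs: "h < length as" "s < length as" using h sh len_as by auto
      have "i < s" using as_mono_iff[OF i(1) hs(2)] j i by simp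
      moreover have "h < i" using as_mono_iff[OF hs(1) i(1)] j i by simp
      ultimately show False using sh by simp
    qed
    ultimately have "length w = card ({j. j < length w \<and> w ! j < as ! s} \<union> {j. j < length w \<and> w ! j > as ! h})"
      by (metis card_lessThan)
    also have "\<dots> = ltc (as ! s) + gtc (as ! h)" unfolding ltc_def gtc_def
      by (rule card_Un_disjoint) (use disj in auto)
    finally show ?thesis by simp
  qed
  have "ltc (as ! s) = gtc (as ! h)" using two b1 b2 part by linarith
  then show ?thesis using h_def by simp
qed

lemma sum_low:
  assumes s: "s < length as"
  shows "(\<Sum>h<s. count_list w (as ! h)) = ltc (as ! s)"
proof -
  define A where "A h = {j. j < length w \<and> w ! j = as ! h}" for h
  have "(\<Sum>h<s. count_list w (as ! h)) = (\<Sum>h<s. card (A h))" using count_eq A_def by simp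
  also have "\<dots> = card (\<Union>h<s. A h)"
  proof (rule card_UN_disjoint[symmetric])
    show "\<forall>i\<in>{..<s}. \<forall>j\<in>{..<s}. i \<noteq> j \<longrightarrow> A i \<inter> A j = {}"
      using as_inj s unfolding A_def by fastforce
  qed (auto simp: A_def)
  also have "(\<Union>h<s. A h) = {j. j < length w \<and> w ! j < as ! s}"
  proof
    show "(\<Union>h<s. A h) \<subseteq> {j. j < length w \<and> w ! j < as ! s}"
      using as_mono_iff s unfolding A_def by auto
    show "{j. j < length w \<and> w ! j < as ! s} \<subseteq> (\<Union>h<s. A h)"
    proof
      fix j assume j: "j \<in> {j. j < length w \<and> w ! j < as ! s}"
      obtain i where i: "i < length as" "w ! j = as ! i" using letter_in_as j by auto
      then have "i < s" using as_mono_iff[OF i(1) s] j by simp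
      then show "j \<in> (\<Union>h<s. A h)" using i j A_def by auto
    qed
  qed
  finally show ?thesis unfolding ltc_def .
qed

lemma sum_high:
  assumes s: "1 \<le> s" "s < length as"
  shows "(\<Sum>h\<in>{s..<length as}. count_list w (as ! h)) = gtc (as ! (s - 1))"
proof -
  define A where "A h = {j. j < length w \<and> w ! j = as ! h}" for h
  have s1: "s - 1 < length as" using s by simp
  have "(\<Sum>h\<in>{s..<length as}. count_list w (as ! h)) = (\<Sum>h\<in>{s..<length as}. card (A h))" using count_eq A_def by simp
  also have "\<dots> = card (\<Union>h\<in>{s..<length as}. A h)"
  proof (rule card_UN_disjoint[symmetric])
    show "\<forall>i\<in>{s..<length as}. \<forall>j\<in>{s..<length as}. i \<noteq> j \<longrightarrow> A i \<inter> A j = {}"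
      using as_inj unfolding A_def by fastforce
  qed (auto simp: A_def)
  also have "(\<Union>h\<in>{s..<length as}. A h) = {j. j < length w \<and> w ! j > as ! (s - 1)}"
  proof
    show "(\<Union>h\<in>{s..<length as}. A h) \<subseteq> {j. j < length w \<and> w ! j > as ! (s - 1)}"
      using as_mono_iff s1 s unfolding A_def by auto
    show "{j. j < length w \<and> w ! j > as ! (s - 1)} \<subseteq> (\<Union>h\<in>{s..<length as}. A h)"
    proof
      fix j assume j: "j \<in> {j. j < length w \<and> w ! j > as ! (s - 1)}"
      obtain i where i: "i < length as" "w ! j = as ! i" using letter_in_as j by auto
      then have "s - 1 < i" using as_mono_iff[OF s1 i(1)] j by simp
      then show "j \<in> (\<Union>h\<in>{s..<length as}. A h)" using i j A_def s by auto
    qed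
  qed
  finally show ?thesis unfolding gtc_def .
qed

end

theorem lemma4p7:
  fixes w :: "'a::linorder list" and as :: "'a list" and pis :: "'a list list" and s :: nat
  assumes "perfectly_clustering w" and "lyndon w"
    and "palindromic_special_factorization w as pis"
    and "1 \<le> s" and "s \<le> length as - 1"
    and "pis ! (s - 1) = []"
  shows "(\<Sum>h<s. count_list w (as ! h)) = (\<Sum>h\<in>{s..<length as}. count_list w (as ! h))"
proof -
  interpret pcf w as pis
    using assms(1,3) unfolding pcf_def pcw_def pcf_axioms_def perfectly_clustering_def by auto
  have sK: "s \<le> length pis" using assms(5) len_as by simp
  have sa: "s < length as" using sK len_as by simp
  show ?thesis using sum_low[OF sa] sum_high[OF assms(4) sa] half[OF assms(4) sK assms(6)] by simp
qed

end
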